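(* For $\gamma\in\mathbb R$ define $\omega_\gamma,\mathcal V:\mathbb R^2\to\mathbb R$ by $$\omega_\gamma(x,y)=\arctan\left(\frac{\cos x\sin\gamma}{\cos y+\cos x\cos\gamma}\right),\qquad \mathcal V(x,y)=\tfrac14\mathcal L\left(x+\tfrac\pi2-y\right)+\tfrac14\mathcal L\left(-x+\tfrac\pi2-y\right)+\tfrac12\mathcal L(y).$$ If $\alpha,\beta\in\mathbb R$, then $$2\,\mathcal V(\alpha,\omega_\gamma(\alpha,\beta))+2\,\mathcal V(\beta,\omega_\gamma(\beta,\alpha))=I_{\pi-\gamma}\left(\frac{\alpha-\beta-\gamma+\pi}2\right)-I_\gamma\left(\frac{\alpha+\beta+\gamma-\pi}2\right).$$
   Context: $\mathcal L(x)=-\int_0^x\log|2\sin\vartheta|\,d\vartheta$ is the Lobachevsky function, and $I_\phi(x)=\mathcal L(x)+\mathcal L(\phi-x)-2\mathcal L(\phi/2)$. The function $\arctan$ is extended to $\mathbb R\cup\{\pm\infty\}$ by $\arctan(+\infty)=\pi/2$, $\arctan(-\infty)=-\pi/2$. *)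

theory Defs
  imports "HOL-Analysis.Analysis"
begin

text \<open>Lobachevsky function: L(x) = - integral from 0 to x of log|2 sin t| dt
  (oriented Lebesgue interval integral; the integrand has integrable log singularities).\<close>
definition Lob :: "real \<Rightarrow> real" where
  "Lob x = - (LBINT t=ereal 0..ereal x. ln \<bar>2 * sin t\<bar>)"

definition Iphi :: "real \<Rightarrow> real \<Rightarrow> real" where
  "Iphi \<phi> x = Lob x + Lob (\<phi> - x) - 2 * Lob (\<phi> / 2)"

text \<open>arctan of c/d, extended: c/0 = +-infinity with arctan(+-infinity) = +-pi/2;
  0/0 is read as 0 (Isabelle's division convention).\<close>
definition ext_arctan_quot :: "real \<Rightarrow> real \<Rightarrow> real" where
  "ext_arctan_quot c d =
     (if d = 0 then (if c > 0 then pi/2 else if c < 0 then - pi/2 else 0)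
      else arctan (c / d))"

definition omega :: "real \<Rightarrow> real \<Rightarrow> real \<Rightarrow> real" where
  "omega \<gamma> x y = ext_arctan_quot (cos x * sin \<gamma>) (cos y + cos x * cos \<gamma>)"

definition VV :: "real \<Rightarrow> real \<Rightarrow> real" where
  "VV x y = Lob (x + pi/2 - y) / 4 + Lob (- x + pi/2 - y) / 4 + Lob y / 2"

end

theory Submission
  imports Defs "HOL-Real_Asymp.Real_Asymp"
begin

lemma xlnx_cont: "isCont (\<lambda>s::real. s * ln \<bar>s\<bar>) 0"
proof -
  have l: "((\<lambda>s::real. s * ln \<bar>s\<bar>) \<longlongrightarrow> 0) (at_left 0)"
  proof -
    have "((\<lambda>s::real. s * ln (-s)) \<longlongrightarrow> 0) (at_left 0)" by real_asymp
    then show ?thesis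
      by (rule Lim_transform_eventually) (auto simp: eventually_at_left_field intro!: exI[of _ "-1"])
  qed
  have r: "((\<lambda>s::real. s * ln \<bar>s\<bar>) \<longlongrightarrow> 0) (at_right 0)"
  proof -
    have "((\<lambda>s::real. s * ln s) \<longlongrightarrow> 0) (at_right 0)" by real_asymp
    then show ?thesis
      by (rule Lim_transform_eventually) (auto simp: eventually_at_right_field intro!: exI[of _ "1"])
  qed
  show ?thesis unfolding isCont_def using filterlim_split_at[OF l r] by simp
qed


lemma ln_abs_integrable:
  fixes x a b :: real
  shows "(\<lambda>t. ln \<bar>t - x\<bar>) integrable_on {a..b}"
proof (cases "a \<le> b")
  case False then show ?thesis by (simp add: integrable_on_empty)
next
  case True
  define G where "G t = (t - x) * ln \<bar>t - x\<bar> - (t - x)" for t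
  have contG: "continuous_on {a..b} G"
  proof -
    have "isCont G t" for t
    proof (cases "t = x")
      case True
      have c1: "isCont (\<lambda>t. (\<lambda>s. s * ln \<bar>s\<bar>) (t - x)) t"
        by (rule isCont_o2[where f="\<lambda>t. t - x"]) (auto simp: True intro: xlnx_cont)
      have "isCont (\<lambda>t. (t - x) * ln \<bar>t - x\<bar> - (t - x)) t"
        using isCont_diff[OF c1, of "\<lambda>t. t - x"] by (simp add: o_def)
      then show ?thesis unfolding G_def .
    next
      case False
      then show ?thesis unfolding G_def by (intro continuous_intros) auto
    qed
    then show ?thesis by (simp add: continuous_at_imp_continuous_on)
  qed
  have "((\<lambda>t. ln \<bar>t - x\<bar>) has_integral (G b - G a)) {a..b}"
  proof (rule fundamental_theorem_of_calculus_interior_strong[where S="{x}"])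
    fix t assume t: "t \<in> {a<..<b} - {x}"
    show "(G has_vector_derivative ln \<bar>t - x\<bar>) (at t)"
    proof -
      have "(G has_real_derivative ln \<bar>t - x\<bar>) (at t)"
      proof (cases "t > x")
        case True
        have "((\<lambda>t. (t - x) * ln (t - x) - (t - x)) has_real_derivative ln \<bar>t - x\<bar>) (at t)"
          using True by (auto intro!: derivative_eq_intros)
        then show ?thesis
          by (rule has_field_derivative_transform_within_open[where S="{x<..}"]) (use True in \<open>auto simp: G_def\<close>)
      next
        case False
        with t have tx: "t < x" by auto
        have "((\<lambda>t. (t - x) * ln (x - t) - (t - x)) has_real_derivative ln \<bar>t - x\<bar>) (at t)"
          using tx by (auto intro!: derivative_eq_intros simp: divide_simps)
        then show ?thesis
          by (rule has_field_derivative_transform_within_open[where S="{..<x}"]) (use tx in \<open>auto simp: G_def\<close>)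
      qed
      then show ?thesis by (simp add: has_real_derivative_iff_has_vector_derivative)
    qed
  qed (use True contG in auto)
  then show ?thesis by blast
qed


lemma sin_lower:
  fixes s :: real
  assumes "0 \<le> s" "s \<le> 1"
  shows "s / 2 \<le> sin s"
proof -
  have "(\<lambda>x. x/2 - sin x) 0 \<ge> (\<lambda>x. x/2 - sin x) s"
  proof (rule DERIV_nonpos_imp_nonincreasing[where f="\<lambda>x. x/2 - sin x"])
    show "0 \<le> s" by fact
    fix x assume x: "0 \<le> x" "x \<le> s"
    have "cos (pi/3) < cos x"
      using x assms pi_gt3 by (intro cos_monotone_0_pi) auto
    then have "cos x > 1/2" by (simp add: cos_60)
    then show "\<exists>y. ((\<lambda>x. x/2 - sin x) has_real_derivative y) (at x) \<and> y \<le> 0"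
      by (intro exI[of _ "1/2 - cos x"]) (auto intro!: derivative_eq_intros)
  qed
  then show ?thesis by simp
qed

lemma abs_sin_lower:
  fixes s :: real
  assumes "\<bar>s\<bar> \<le> 1"
  shows "\<bar>s\<bar> \<le> 2 * \<bar>sin s\<bar>"
proof (cases "s \<ge> 0")
  case True
  then show ?thesis using sin_lower[of s] assms by auto
next
  case False
  then show ?thesis using sin_lower[of "-s"] assms by auto
qed

definition lsin :: "real \<Rightarrow> real" where "lsin t = ln \<bar>2 * sin t\<bar>"

lemma lsin_measurable: "lsin \<in> borel_measurable (lebesgue_on S)"
proof -
  have "lsin \<in> borel_measurable borel" unfolding lsin_def by measurable
  then have "lsin \<in> borel_measurable lborel" by simp
  then have "lsin \<in> borel_measurable lebesgue" by (rule measurable_completion)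
  then show ?thesis by (rule measurable_restrict_space1)
qed

lemma lsin_le: "lsin t \<le> ln 2"
proof (cases "sin t = 0")
  case True then show ?thesis by (simp add: lsin_def)
next
  case False
  have "\<bar>2 * sin t\<bar> \<le> 2" by (simp add: abs_mult)
  then show ?thesis unfolding lsin_def using False by (subst ln_le_cancel_iff) auto
qed

lemma lsin_bound_near_zero:
  fixes x t :: real
  assumes "sin x = 0" "\<bar>t - x\<bar> < 1"
  shows "\<bar>lsin t\<bar> \<le> ln 2 - ln \<bar>t - x\<bar>"
proof (cases "t = x")
  case True then show ?thesis using assms by (simp add: lsin_def)
next
  case False
  have cx: "\<bar>cos x\<bar> = 1" using assms(1) sin_cos_squared_add[of x]
    by (metis abs_1 abs_power2 power2_eq_1_iff power2_abs sin_zero_abs_cos_one)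
  have "sin t = sin (t - x) * cos x"
    using sin_add[of "t - x" x] assms(1) by simp
  then have st: "\<bar>sin t\<bar> = \<bar>sin (t - x)\<bar>" using cx by (simp add: abs_mult)
  have lo: "\<bar>t - x\<bar> \<le> \<bar>2 * sin t\<bar>" using abs_sin_lower[of "t - x"] assms st by (simp add: abs_mult)
  have pos: "0 < \<bar>t - x\<bar>" using False by simp
  have l1: "ln \<bar>t - x\<bar> \<le> lsin t" unfolding lsin_def
    using lo pos by (subst ln_le_cancel_iff) auto
  have l2: "ln \<bar>t - x\<bar> \<le> 0" using assms pos by simp
  show ?thesis using l1 l2 lsin_le[of t] ln_2_less_1 ln_gt_zero[of 2] by linarith
qed

lemma lsin_integrable: "lsin integrable_on {a..b}"
proof -
  have "lsin integrable_on cbox a b"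
  proof (rule integrable_on_little_subintervals, intro ballI)
    fix x assume "x \<in> cbox a b"
    show "\<exists>d>0. \<forall>u v. x \<in> cbox u v \<and> cbox u v \<subseteq> ball x d \<and> cbox u v \<subseteq> cbox a b \<longrightarrow> lsin integrable_on cbox u v"
    proof (cases "sin x = 0")
      case True
      show ?thesis
      proof (intro exI[of _ 1] conjI allI impI)
        fix u v assume uv: "x \<in> cbox u v \<and> cbox u v \<subseteq> ball x 1 \<and> cbox u v \<subseteq> cbox a b"
        have gi: "(\<lambda>t. ln 2 - ln \<bar>t - x\<bar>) integrable_on {u..v}"
          by (intro integrable_diff ln_abs_integrable integrable_const_ivl)
        have "lsin integrable_on {u..v}"
        proof (rule measurable_bounded_by_integrable_imp_integrable_real[OF lsin_measurable gi])
          fix t assume "t \<in> {u..v}"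
          then have "t \<in> ball x 1" using uv by (auto simp: cbox_interval)
          then have "\<bar>t - x\<bar> < 1" by (simp add: dist_real_def)
          then show "\<bar>lsin t\<bar> \<le> ln 2 - ln \<bar>t - x\<bar>" using lsin_bound_near_zero True by blast
        qed simp
        then show "lsin integrable_on cbox u v" by (simp add: cbox_interval)
      qed simp
    next
      case False
      have "isCont sin x" by simp
      then obtain d where d: "d > 0" "\<And>t. dist x t < d \<Longrightarrow> sin t \<noteq> 0"
        using continuous_at_avoid[of x sin 0] False by blast
      show ?thesis
      proof (intro exI[of _ d] conjI allI impI)
        fix u v assume uv: "x \<in> cbox u v \<and> cbox u v \<subseteq> ball x d \<and> cbox u v \<subseteq> cbox a b"
        have "continuous_on (cbox u v) lsin"
        proof (intro continuous_at_imp_continuous_on ballI)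
          fix t assume "t \<in> cbox u v"
          then have "t \<in> ball x d" using uv by blast
          then have "sin t \<noteq> 0" using d by simp
          then show "isCont lsin t" unfolding lsin_def by (intro continuous_intros) auto
        qed
        then show "lsin integrable_on cbox u v" by (rule integrable_continuous)
      qed (rule d(1))
    qed
  qed
  then show ?thesis by (simp add: cbox_interval)
qed

lemma lsin_abs_integrable: "lsin absolutely_integrable_on {a..b}"
proof -
  have h: "(\<lambda>t. ln 2 - lsin t) absolutely_integrable_on {a..b}"
    by (rule nonnegative_absolutely_integrable_1) (auto intro!: integrable_diff lsin_integrable simp: lsin_le)
  have c: "(\<lambda>t. ln 2 :: real) absolutely_integrable_on {a..b}"
    by (rule absolutely_integrable_continuous_real) auto
  have "(\<lambda>t. ln 2 - (ln 2 - lsin t)) absolutely_integrable_on {a..b}"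
    by (rule set_integral_diff(1)[OF c h])
  then show ?thesis by simp
qed

lemma lsin_set_integrable: "set_integrable lborel {a..b} lsin"
proof -
  have "integrable lebesgue (\<lambda>x. indicator {a..b} x *\<^sub>R lsin x)"
    using lsin_abs_integrable unfolding set_integrable_def .
  then have "integrable lborel (\<lambda>x. indicator {a..b} x *\<^sub>R lsin x)"
    by (subst (asm) integrable_completion) (auto simp: lsin_def)
  then show ?thesis unfolding set_integrable_def .
qed


lemma Lob_lsin: "Lob x = - (LBINT t=ereal 0..ereal x. lsin t)"
  unfolding Lob_def lsin_def by simp

lemma Lob_eq_integral:
  assumes "-R \<le> x" "x \<le> R"
  shows "Lob x = integral {-R..0} lsin - integral {-R..x} lsin"
proof (cases "0 \<le> x")
  case True
  have "Lob x = - integral {0..x} lsin"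
    unfolding Lob_lsin using True by (subst interval_integral_eq_integral) (auto intro: lsin_set_integrable)
  moreover have "integral {-R..0} lsin + integral {0..x} lsin = integral {-R..x} lsin"
    by (rule Henstock_Kurzweil_Integration.integral_combine) (use True assms in \<open>auto intro: lsin_integrable\<close>)
  ultimately show ?thesis by linarith
next
  case False
  have "Lob x = integral {x..0} lsin"
    unfolding Lob_lsin using False
    by (subst interval_integral_endpoints_reverse) (subst interval_integral_eq_integral, auto intro: lsin_set_integrable)
  moreover have "integral {-R..x} lsin + integral {x..0} lsin = integral {-R..0} lsin"
    by (rule Henstock_Kurzweil_Integration.integral_combine) (use False assms in \<open>auto intro: lsin_integrable\<close>)
  ultimately show ?thesis by linarith
qed

lemma Lob_isCont: "isCont Lob x"
proof -
  define R where "R = \<bar>x\<bar> + 1"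
  have c: "continuous_on {-R..R} (\<lambda>y. integral {-R..0} lsin - integral {-R..y} lsin)"
    by (intro continuous_intros indefinite_integral_continuous_1 lsin_integrable)
  have "continuous_on {-R<..<R} Lob"
  proof (rule continuous_on_eq[OF continuous_on_subset[OF c]])
    show "\<And>y. y \<in> {-R<..<R} \<Longrightarrow> integral {-R..0} lsin - integral {-R..y} lsin = Lob y"
      by (rule Lob_eq_integral[symmetric]) auto
  qed auto
  then show ?thesis
    by (rule continuous_on_interior) (auto simp: R_def)
qed

lemma Lob_deriv:
  assumes "sin x \<noteq> 0"
  shows "(Lob has_real_derivative - lsin x) (at x)"
proof -
  define R where "R = \<bar>x\<bar> + 1"
  have x: "x \<in> {-R<..<R}" by (auto simp: R_def)
  have cl: "isCont lsin x" unfolding lsin_def using assms by (intro continuous_intros) auto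
  have "((\<lambda>u. integral {-R..u} lsin) has_vector_derivative lsin x) (at x within ({-R..R} - {}))"
    by (rule integral_has_vector_derivative_continuous_at)
       (use x cl lsin_integrable in \<open>auto intro: continuous_at_imp_continuous_within\<close>)
  then have "((\<lambda>u. integral {-R..u} lsin) has_real_derivative lsin x) (at x)"
    using x by (simp add: has_real_derivative_iff_has_vector_derivative at_within_Icc_at)
  then have "((\<lambda>u. integral {-R..0} lsin - integral {-R..u} lsin) has_real_derivative 0 - lsin x) (at x)"
    by (intro derivative_intros)
  then have "((\<lambda>u. integral {-R..0} lsin - integral {-R..u} lsin) has_real_derivative - lsin x) (at x)"
    by simp
  then show ?thesis
    by (rule has_field_derivative_transform_within_open[where S="{-R<..<R}"])
       (use x in \<open>auto intro!: Lob_eq_integral[symmetric]\<close>)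
qed

lemma Lob_0 [simp]: "Lob 0 = 0"
  by (simp add: Lob_def)


lemma const_lemma:
  fixes h :: "real \<Rightarrow> real"
  assumes cont: "\<And>x. isCont h x"
    and der: "\<And>x. x \<notin> E \<Longrightarrow> (h has_real_derivative 0) (at x)"
    and fin: "\<And>a b. finite (E \<inter> {a..b})"
  shows "h x = h y"
proof -
  define S where "S = {min x y - 1 <..< max x y + 1}"
  define K where "K = E \<inter> {min x y - 1 .. max x y + 1}"
  obtain c where c: "\<And>z. z \<in> S \<Longrightarrow> h z = c"
  proof (rule DERIV_zero_connected_constant[of S K h])
    show "connected S" unfolding S_def by simp
    show "open S" unfolding S_def by simp
    show "finite K" unfolding K_def by (rule fin)
    show "continuous_on S h" using cont by (simp add: continuous_at_imp_continuous_on)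
    show "\<forall>z\<in>S - K. DERIV h z :> 0" using der by (auto simp: S_def K_def)
  qed blast
  have "x \<in> S" "y \<in> S" by (auto simp: S_def)
  then show ?thesis using c by simp
qed

lemma fin_sin_zero:
  fixes m e a b :: real
  assumes "m \<noteq> 0"
  shows "finite {x \<in> {a..b}. sin (m * x + e) = 0}"
proof -
  define N where "N = ceiling ((\<bar>m\<bar> * (\<bar>a\<bar> + \<bar>b\<bar>) + \<bar>e\<bar>) / pi)"
  have "{x \<in> {a..b}. sin (m * x + e) = 0} \<subseteq> (\<lambda>k::int. (of_int k * pi - e) / m) ` {-N..N}"
  proof
    fix x assume x: "x \<in> {x \<in> {a..b}. sin (m * x + e) = 0}"
    then obtain i :: int where i: "m * x + e = of_int i * pi"
      by (auto simp: sin_zero_iff_int2)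
    have xe: "x = (of_int i * pi - e) / m" using i assms by (auto simp: field_simps)
    have "\<bar>x\<bar> \<le> \<bar>a\<bar> + \<bar>b\<bar>" using x by auto
    then have "\<bar>m * x\<bar> \<le> \<bar>m\<bar> * (\<bar>a\<bar> + \<bar>b\<bar>)" by (simp add: abs_mult mult_left_mono)
    then have "\<bar>of_int i * pi\<bar> \<le> \<bar>m\<bar> * (\<bar>a\<bar> + \<bar>b\<bar>) + \<bar>e\<bar>" unfolding i[symmetric] by linarith
    then have "\<bar>of_int i\<bar> * pi \<le> \<bar>m\<bar> * (\<bar>a\<bar> + \<bar>b\<bar>) + \<bar>e\<bar>" by (simp add: abs_mult)
    then have "\<bar>of_int i\<bar> \<le> (\<bar>m\<bar> * (\<bar>a\<bar> + \<bar>b\<bar>) + \<bar>e\<bar>) / pi" by (simp add: field_simps)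
    then have "\<bar>real_of_int i\<bar> \<le> real_of_int N" unfolding N_def by linarith
    then have "\<bar>i\<bar> \<le> N" by linarith
    then have "i \<in> {-N..N}" by auto
    then show "x \<in> (\<lambda>k::int. (of_int k * pi - e) / m) ` {-N..N}" using xe by blast
  qed
  then show ?thesis by (rule finite_subset) auto
qed

lemma Lob_chain:
  assumes "(g has_real_derivative g') (at x)" "sin (g x) \<noteq> 0"
  shows "((\<lambda>x. Lob (g x)) has_real_derivative (- lsin (g x)) * g') (at x)"
  by (rule DERIV_chain2[OF Lob_deriv[OF assms(2)] assms(1)])

lemma Lob_odd: "Lob (- x) = - Lob x"
proof -
  have "(\<lambda>x. Lob (- x) + Lob x) x = (\<lambda>x. Lob (- x) + Lob x) 0"
  proof (rule const_lemma[where E="{x. sin x = 0}" and h="\<lambda>x. Lob (- x) + Lob x"])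
    show "isCont (\<lambda>x. Lob (- x) + Lob x) x" for x
      by (intro continuous_intros isCont_o2[OF _ Lob_isCont] Lob_isCont)
    show "finite ({x. sin x = 0} \<inter> {a..b})" for a b :: real
      using fin_sin_zero[of 1 a b 0] by (simp add: Int_def conj_commute)
    fix x :: real assume "x \<notin> {x. sin x = 0}"
    then have s: "sin x \<noteq> 0" by simp
    have "((\<lambda>x. Lob (- x) + Lob x) has_real_derivative (- lsin (- x)) * (- 1) + - lsin x) (at x)"
      by (intro derivative_intros Lob_chain Lob_deriv) (use s in auto)
    then show "((\<lambda>x. Lob (- x) + Lob x) has_real_derivative 0) (at x)"
      by (simp add: lsin_def)
  qed
  then show ?thesis by simp
qed


lemma Lob_isCont_comp [continuous_intros]: "isCont g x \<Longrightarrow> isCont (\<lambda>x. Lob (g x)) x"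
  by (rule isCont_o2[OF _ Lob_isCont])

lemma lsin_double:
  assumes "sin x \<noteq> 0" "cos x \<noteq> 0"
  shows "lsin (2 * x) = lsin x + lsin (x + pi/2)"
proof -
  have "\<bar>2 * sin (2 * x)\<bar> = \<bar>2 * sin x\<bar> * \<bar>2 * cos x\<bar>"
    by (simp add: sin_double abs_mult)
  then show ?thesis unfolding lsin_def using assms
    by (simp add: ln_mult sin_add)
qed

lemma lsin_plus_pi: "lsin (x + pi) = lsin x"
  by (simp add: lsin_def)


lemma Lob_affine:
  fixes c e x :: real
  assumes "sin (c * x + e) \<noteq> 0"
  shows "((\<lambda>x. Lob (c * x + e)) has_real_derivative - lsin (c * x + e) * c) (at x)"
proof -
  have "((\<lambda>x. c * x + e) has_real_derivative c) (at x)"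
    using DERIV_add[OF DERIV_cmult[OF DERIV_ident, of c] DERIV_const[of e]] by simp
  then show ?thesis using Lob_chain[of "\<lambda>x. c * x + e" c x] assms by simp
qed


lemma Lob_dup0: "Lob (2 * x) = 2 * Lob x + 2 * Lob (x + pi/2) - 2 * Lob (pi/2)"
proof -
  have "(\<lambda>x. Lob (2 * x) - 2 * Lob x - 2 * Lob (x + pi/2)) x = (\<lambda>x. Lob (2 * x) - 2 * Lob x - 2 * Lob (x + pi/2)) 0"
  proof (rule const_lemma[where E="{x. sin (2 * x + 0) = 0}" and h="\<lambda>x. Lob (2 * x) - 2 * Lob x - 2 * Lob (x + pi/2)"])
    show "isCont (\<lambda>x. Lob (2 * x) - 2 * Lob x - 2 * Lob (x + pi/2)) x" for x
      by (intro continuous_intros)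
    show "finite ({x. sin (2 * x + 0) = 0} \<inter> {a..b})" for a b :: real
      using fin_sin_zero[of 2 a b 0] by (simp add: Int_def conj_commute)
    fix x :: real assume "x \<notin> {x. sin (2 * x + 0) = 0}"
    then have s: "sin x \<noteq> 0" "cos x \<noteq> 0" by (auto simp: sin_double)
    then have s2: "sin (x + pi/2) \<noteq> 0" "sin (2 * x) \<noteq> 0" by (auto simp: sin_add sin_double)
    have d1: "((\<lambda>x. Lob (2*x)) has_real_derivative - lsin (2*x) * 2) (at x)"
      using Lob_affine[of 2 x 0] s2 by simp
    have d2: "(Lob has_real_derivative - lsin x) (at x)" using Lob_deriv s by simp
    have d3: "((\<lambda>x. Lob (x + pi/2)) has_real_derivative - lsin (x + pi/2)) (at x)"
      using Lob_affine[of 1 x "pi/2"] s2 by simp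
    have "((\<lambda>x. Lob (2 * x) - 2 * Lob x - 2 * Lob (x + pi/2)) has_real_derivative
        (- lsin (2*x) * 2 - 2 * (- lsin x) - 2 * (- lsin (x + pi/2)))) (at x)"
      by (intro DERIV_diff DERIV_cmult d1 d2 d3)
    then show "((\<lambda>x. Lob (2 * x) - 2 * Lob x - 2 * Lob (x + pi/2)) has_real_derivative 0) (at x)"
      using lsin_double[OF s] by simp
  qed
  then show ?thesis by simp
qed

lemma Lob_pi: "Lob pi = 0"
  using Lob_dup0[of "pi/2"] by simp

lemma Lob_plus_pi: "Lob (x + pi) = Lob x"
proof -
  have "(\<lambda>x. Lob (x + pi) - Lob x) x = (\<lambda>x. Lob (x + pi) - Lob x) 0"
  proof (rule const_lemma[where E="{x. sin (1 * x + 0) = 0}" and h="\<lambda>x. Lob (x + pi) - Lob x"])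
    show "isCont (\<lambda>x. Lob (x + pi) - Lob x) x" for x
      by (intro continuous_intros)
    show "finite ({x. sin (1 * x + 0) = 0} \<inter> {a..b})" for a b :: real
      using fin_sin_zero[of 1 a b 0] by (simp add: Int_def conj_commute)
    fix x :: real assume "x \<notin> {x. sin (1 * x + 0) = 0}"
    then have s: "sin x \<noteq> 0" "sin (x + pi) \<noteq> 0" by auto
    have d1: "((\<lambda>x. Lob (x + pi)) has_real_derivative - lsin (x + pi)) (at x)"
      using Lob_affine[of 1 x pi] s by simp
    have d2: "(Lob has_real_derivative - lsin x) (at x)" using Lob_deriv s by simp
    have "((\<lambda>x. Lob (x + pi) - Lob x) has_real_derivative - lsin (x + pi) - (- lsin x)) (at x)"
      by (intro DERIV_diff d1 d2)
    then show "((\<lambda>x. Lob (x + pi) - Lob x) has_real_derivative 0) (at x)"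
      by (simp add: lsin_plus_pi)
  qed
  then show ?thesis using Lob_pi by simp
qed


lemma Lob_plus_nat_pi: "Lob (x + real n * pi) = Lob x"
proof (induction n arbitrary: x)
  case 0 then show ?case by simp
next
  case (Suc n)
  have "Lob (x + real (Suc n) * pi) = Lob ((x + real n * pi) + pi)" by (rule arg_cong[where f=Lob]) (simp add: algebra_simps)
  also have "\<dots> = Lob x" using Lob_plus_pi Suc by simp
  finally show ?case .
qed

lemma Lob_plus_int_pi: "Lob (x + of_int k * pi) = Lob x"
proof (cases "k \<ge> 0")
  case True
  define n where "n = nat k"
  have "k = int n" using True by (simp add: n_def)
  then show ?thesis using Lob_plus_nat_pi[of x n] by simp
next
  case False
  define n where "n = nat (- k)"
  have n: "k = - int n" using False by (simp add: n_def)
  have "Lob x = Lob ((x + of_int k * pi) + real n * pi)" by (simp add: n)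
  also have "\<dots> = Lob (x + of_int k * pi)" by (rule Lob_plus_nat_pi)
  finally show ?thesis by simp
qed


lemma Lob_pi_half: "Lob (pi/2) = 0"
proof -
  have "Lob (pi/2) = Lob (- (pi/2) + pi)" by (rule arg_cong[where f=Lob]) simp
  also have "\<dots> = - Lob (pi/2)" by (simp only: Lob_plus_pi Lob_odd)
  finally show ?thesis by simp
qed

lemma Lob_dup: "Lob (2 * x) = 2 * Lob x + 2 * Lob (x + pi/2)"
  using Lob_dup0[of x] Lob_pi_half by simp

lemma Lob_half_int: "Lob (of_int m * pi / 2) = 0"
proof (cases "even m")
  case True
  then obtain j where j: "m = 2 * j" by blast
  have "Lob (of_int m * pi / 2) = Lob (0 + of_int j * pi)" by (rule arg_cong[where f=Lob]) (simp add: j)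
  then show ?thesis using Lob_plus_int_pi[of 0 j] by simp
next
  case False
  then obtain j where j: "m = 2 * j + 1" using oddE by blast
  have "Lob (of_int m * pi / 2) = Lob (pi/2 + of_int j * pi)" by (rule arg_cong[where f=Lob]) (simp add: j field_simps)
  then show ?thesis using Lob_plus_int_pi[of "pi/2" j] Lob_pi_half by simp
qed

lemma Lob_minus_pi: "Lob (x - pi) = Lob x"
  using Lob_plus_pi[of "x - pi"] by simp


lemma Lob_arg: "a = b \<Longrightarrow> Lob a = Lob b" by simp

lemma VV_shift: "VV x (y + of_int k * pi) = VV x y"
proof -
  have 1: "Lob (x + pi/2 - (y + of_int k * pi)) = Lob (x + pi/2 - y)"
    using Lob_plus_int_pi[of "x + pi/2 - y" "-k"] by (simp add: algebra_simps)
  have 2: "Lob (- x + pi/2 - (y + of_int k * pi)) = Lob (- x + pi/2 - y)"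
    using Lob_plus_int_pi[of "- x + pi/2 - y" "-k"] by (simp add: algebra_simps)
  have 3: "Lob (y + of_int k * pi) = Lob y" by (rule Lob_plus_int_pi)
  show ?thesis unfolding VV_def 1 2 3 ..
qed

lemma VV_cos0:
  assumes "cos x = 0"
  shows "VV x y = 0"
proof -
  obtain n :: int where n: "x = of_int n * pi + pi/2" using assms by (auto simp: cos_zero_iff_int2)
  have 1: "Lob (x + pi/2 - y) = - Lob y"
  proof -
    have "Lob (x + pi/2 - y) = Lob (- y + of_int (n + 1) * pi)"
      by (rule Lob_arg) (simp add: n algebra_simps)
    also have "\<dots> = - Lob y" by (simp only: Lob_plus_int_pi Lob_odd)
    finally show ?thesis .
  qed
  have 2: "Lob (- x + pi/2 - y) = - Lob y"
  proof -
    have "Lob (- x + pi/2 - y) = Lob (- y + of_int (- n) * pi)"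
      by (rule Lob_arg) (simp add: n algebra_simps)
    also have "\<dots> = - Lob y" by (simp only: Lob_plus_int_pi Lob_odd)
    finally show ?thesis .
  qed
  show ?thesis unfolding VV_def 1 2 by simp
qed

lemma VV_zero: "VV x 0 = 0"
proof -
  have "Lob (- x + pi/2) = - Lob (x + pi/2)"
  proof -
    have "Lob (- x + pi/2) = - Lob ((x + pi/2) - pi)"
      using Lob_odd[of "(x + pi/2) - pi"] by (simp add: algebra_simps)
    then show ?thesis by (simp only: Lob_minus_pi)
  qed
  then show ?thesis unfolding VV_def by simp
qed

lemma ext_rel:
  assumes "c \<noteq> 0 \<or> d \<noteq> 0"
  shows "sin (ext_arctan_quot c d) * d = cos (ext_arctan_quot c d) * c"
proof (cases "d = 0")
  case True
  then show ?thesis by (simp add: ext_arctan_quot_def)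
next
  case False
  have "sin (arctan (c / d)) = (c / d) * cos (arctan (c / d))"
    using tan_arctan[of "c/d"] cos_arctan_not_zero[of "c/d"] by (simp add: tan_def field_simps)
  then show ?thesis using False by (simp add: ext_arctan_quot_def field_simps)
qed

lemma ext_mod:
  assumes cd: "c \<noteq> 0 \<or> d \<noteq> 0" and rel: "sin \<theta> * d = cos \<theta> * c"
  shows "\<exists>k::int. ext_arctan_quot c d = \<theta> + of_int k * pi"
proof -
  define w where "w = ext_arctan_quot c d"
  have r: "sin w * d = cos w * c" unfolding w_def by (rule ext_rel[OF cd])
  define X where "X = sin w * cos \<theta> - cos w * sin \<theta>"
  have "X * d = 0" unfolding X_def using r rel by algebra
  moreover have "X * c = 0" unfolding X_def using r rel by algebra
  ultimately have "X = 0" using cd by auto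
  then have "sin (w - \<theta>) = 0" unfolding X_def by (simp add: sin_diff)
  then obtain i :: int where "w - \<theta> = of_int i * pi" by (auto simp: sin_zero_iff_int2)
  then show ?thesis unfolding w_def by (intro exI[of _ i]) simp
qed

lemma VV_ext:
  assumes "c \<noteq> 0 \<or> d \<noteq> 0" "sin \<theta> * d = cos \<theta> * c"
  shows "VV x (ext_arctan_quot c d) = VV x \<theta>"
proof -
  obtain k :: int where "ext_arctan_quot c d = \<theta> + of_int k * pi" using ext_mod[OF assms] by blast
  then show ?thesis by (simp add: VV_shift)
qed


lemma Lob_dup_half: "Lob x + Lob (x + pi/2) = Lob (2 * x) / 2"
  using Lob_dup[of x] by simp

lemma base_identity:
  fixes \<beta> \<gamma> :: real
  shows "Iphi (pi - \<gamma>) ((pi/2 - \<beta> - \<gamma> + pi) / 2) - Iphi \<gamma> ((pi/2 + \<beta> + \<gamma> - pi) / 2) = 2 * VV \<beta> \<gamma>"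
proof -
  define u where "u = (\<beta> + \<gamma>)/2 - pi/4"
  define v where "v = (\<beta> - \<gamma>)/2 - pi/4"
  have e1: "Lob ((pi/2 - \<beta> - \<gamma> + pi) / 2) = - Lob (u + pi/2)"
  proof -
    have "Lob ((pi/2 - \<beta> - \<gamma> + pi) / 2) = Lob (- ((u + pi/2) - pi))"
      by (rule Lob_arg) (simp add: u_def field_simps)
    also have "\<dots> = - Lob (u + pi/2)" by (simp only: Lob_odd Lob_minus_pi)
    finally show ?thesis .
  qed
  have e2: "Lob (pi - \<gamma> - (pi/2 - \<beta> - \<gamma> + pi) / 2) = Lob (v + pi/2)"
    by (rule Lob_arg) (simp add: v_def field_simps)
  have e3: "Lob ((pi - \<gamma>) / 2) = - Lob (\<gamma>/2 + pi/2)"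
  proof -
    have "Lob ((pi - \<gamma>) / 2) = Lob (- ((\<gamma>/2 + pi/2) - pi))"
      by (rule Lob_arg) (simp add: field_simps)
    also have "\<dots> = - Lob (\<gamma>/2 + pi/2)" by (simp only: Lob_odd Lob_minus_pi)
    finally show ?thesis .
  qed
  have e4: "Lob ((pi/2 + \<beta> + \<gamma> - pi) / 2) = Lob u"
    by (rule Lob_arg) (simp add: u_def field_simps)
  have e5: "Lob (\<gamma> - (pi/2 + \<beta> + \<gamma> - pi) / 2) = - Lob v"
  proof -
    have "Lob (\<gamma> - (pi/2 + \<beta> + \<gamma> - pi) / 2) = Lob (- v)"
      by (rule Lob_arg) (simp add: v_def field_simps)
    then show ?thesis by (simp add: Lob_odd)
  qed
  have f1: "Lob (2 * u) = - Lob (- \<beta> + pi/2 - \<gamma>)"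
  proof -
    have "Lob (2 * u) = Lob (- (- \<beta> + pi/2 - \<gamma>))" by (rule Lob_arg) (simp add: u_def field_simps)
    then show ?thesis by (simp only: Lob_odd)
  qed
  have f2: "Lob (2 * v) = Lob (\<beta> + pi/2 - \<gamma>)"
  proof -
    have "Lob (2 * v) = Lob ((\<beta> + pi/2 - \<gamma>) - pi)" by (rule Lob_arg) (simp add: v_def field_simps)
    then show ?thesis by (simp only: Lob_minus_pi)
  qed
  have f3: "Lob (\<gamma>/2) + Lob (\<gamma>/2 + pi/2) = Lob \<gamma> / 2"
    using Lob_dup_half[of "\<gamma>/2"] by simp
  show ?thesis
    unfolding Iphi_def VV_def e1 e2 e3 e4 e5
    using Lob_dup_half[of u] Lob_dup_half[of v] f1 f2 f3 by simp
qed


lemma ln_mult_abs: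
  fixes a b :: real
  assumes "a \<noteq> 0" "b \<noteq> 0"
  shows "ln \<bar>a * b\<bar> = ln \<bar>a\<bar> + ln \<bar>b\<bar>"
  using assms by (simp add: abs_mult ln_mult)

lemma ln_prod_id:
  fixes x1 x2 y z1 z2 w :: real
  assumes "x1 * x2 * w^2 = z1 * z2 * y^2" "x1 \<noteq> 0" "x2 \<noteq> 0" "y \<noteq> 0" "w \<noteq> 0"
  shows "ln \<bar>x1\<bar> + ln \<bar>x2\<bar> - 2 * ln \<bar>y\<bar> = ln \<bar>z1\<bar> + ln \<bar>z2\<bar> - 2 * ln \<bar>w\<bar>"
proof -
  have z: "z1 \<noteq> 0" "z2 \<noteq> 0" using assms by auto
  have sq: "ln (u^2) = 2 * ln \<bar>u\<bar>" if "u \<noteq> 0" for u :: real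
    using ln_mult_abs[OF that that] by (simp add: power2_eq_square)
  have e: "ln \<bar>x1 * x2 * w^2\<bar> = ln \<bar>z1 * z2 * y^2\<bar>" using assms(1) by simp
  have l: "ln \<bar>x1 * x2 * w^2\<bar> = ln \<bar>x1\<bar> + ln \<bar>x2\<bar> + 2 * ln \<bar>w\<bar>"
    using assms(2-5) by (simp add: ln_mult_abs sq)
  have r: "ln \<bar>z1 * z2 * y^2\<bar> = ln \<bar>z1\<bar> + ln \<bar>z2\<bar> + 2 * ln \<bar>y\<bar>"
    using assms(2-5) z by (simp add: ln_mult_abs sq)
  show ?thesis using e l r by linarith
qed

lemma ln_ratio_id:
  fixes a b c d :: real
  assumes "a * d = b * c" "a \<noteq> 0" "b \<noteq> 0" "d \<noteq> 0"
  shows "ln \<bar>2 * a\<bar> - ln \<bar>2 * b\<bar> = ln \<bar>c\<bar> - ln \<bar>d\<bar>"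
proof -
  have c: "c \<noteq> 0" using assms by auto
  have e: "ln \<bar>a * d\<bar> = ln \<bar>b * c\<bar>" using assms(1) by simp
  have l: "ln \<bar>a * d\<bar> = ln \<bar>a\<bar> + ln \<bar>d\<bar>" using assms(2-4) by (simp add: ln_mult_abs)
  have r: "ln \<bar>b * c\<bar> = ln \<bar>b\<bar> + ln \<bar>c\<bar>" using assms(2-4) c by (simp add: ln_mult_abs)
  have "ln \<bar>2 * a\<bar> = ln 2 + ln \<bar>a\<bar>" "ln \<bar>2 * b\<bar> = ln 2 + ln \<bar>b\<bar>"
    using assms ln_mult_abs[of 2 a] ln_mult_abs[of 2 b] by simp_all
  then show ?thesis using e l r by linarith
qed

lemma sin_shift1: "sin (x + pi/2 - y) = cos (x - y)"
proof -
  have "sin (x + pi/2 - y) = sin ((x - y) + pi/2)" by (rule arg_cong[where f=sin]) simp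
  also have "\<dots> = cos (x - y)" by (simp only: sin_add) simp
  finally show ?thesis .
qed

lemma sin_shift2: "sin (- x + pi/2 - y) = cos (x + y)"
proof -
  have "sin (- x + pi/2 - y) = sin (pi/2 - (x + y))" by (rule arg_cong[where f=sin]) simp
  also have "\<dots> = cos (x + y)" by (simp only: sin_diff) simp
  finally show ?thesis .
qed

lemma cos_prod:
  fixes x y :: real
  shows "cos (x - y) * cos (x + y) = (cos x)^2 - (sin y)^2"
proof -
  have p: "(sin x)^2 + (cos x)^2 = 1" "(sin y)^2 + (cos y)^2 = 1" by simp_all
  show ?thesis unfolding cos_add cos_diff using p by algebra
qed

lemma rel_R:
  fixes \<alpha> \<beta> \<gamma> T :: real
  assumes "sin T * (cos \<beta> + cos \<alpha> * cos \<gamma>) = cos T * (cos \<alpha> * sin \<gamma>)"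
  shows "cos \<beta> * sin T = cos \<alpha> * sin (\<gamma> - T)"
  using assms unfolding sin_diff by algebra

lemma rel_P:
  fixes \<alpha> \<beta> \<gamma> T :: real
  assumes R: "cos \<beta> * sin T = cos \<alpha> * sin (\<gamma> - T)"
  shows "cos (\<alpha> + T) * (cos \<beta> + cos (\<alpha> - \<gamma>)) = cos (\<alpha> - T) * (cos \<beta> + cos (\<alpha> + \<gamma>))"
  using R unfolding cos_add cos_diff sin_diff by algebra

lemma rel_2:
  fixes \<alpha> \<beta> \<gamma> T :: real
  assumes R: "cos \<beta> * sin T = cos \<alpha> * sin (\<gamma> - T)"
  shows "sin (\<gamma> - T) * (cos \<alpha> + cos \<beta> * cos \<gamma>) = cos (\<gamma> - T) * (cos \<beta> * sin \<gamma>)"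
proof -
  have p: "(sin \<gamma>)^2 + (cos \<gamma>)^2 = 1" by simp
  show ?thesis using R p unfolding cos_diff sin_diff by algebra
qed

lemma rel_K:
  fixes \<alpha> \<beta> \<gamma> T :: real
  assumes R: "cos \<beta> * sin T = cos \<alpha> * sin (\<gamma> - T)"
  shows "(2 * sin (\<alpha> + pi/2 - T)) * (2 * sin (- \<alpha> + pi/2 - T)) * (2 * sin (\<gamma> - T))^2
       = (2 * sin (\<beta> + pi/2 - (\<gamma> - T))) * (2 * sin (- \<beta> + pi/2 - (\<gamma> - T))) * (2 * sin T)^2"
proof -
  have 1: "(2 * sin (\<alpha> + pi/2 - T)) * (2 * sin (- \<alpha> + pi/2 - T)) = 4 * ((cos \<alpha>)^2 - (sin T)^2)"
    using sin_shift1[of \<alpha> T] sin_shift2[of \<alpha> T] cos_prod[of \<alpha> T] by simp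
  have 2: "(2 * sin (\<beta> + pi/2 - (\<gamma> - T))) * (2 * sin (- \<beta> + pi/2 - (\<gamma> - T))) = 4 * ((cos \<beta>)^2 - (sin (\<gamma> - T))^2)"
    using sin_shift1[of \<beta> "\<gamma> - T"] sin_shift2[of \<beta> "\<gamma> - T"] cos_prod[of \<beta> "\<gamma> - T"] by simp
  have R2: "(cos \<beta>)^2 * (sin T)^2 = (cos \<alpha>)^2 * (sin (\<gamma> - T))^2"
    using arg_cong[OF R, of "\<lambda>x. x^2"] by (simp add: power_mult_distrib)
  show ?thesis unfolding 1 2 using R2 by (simp add: power_mult_distrib algebra_simps)
qed


lemma VV_deriv:
  fixes \<phi> \<psi> :: "real \<Rightarrow> real"
  assumes d\<phi>: "(\<phi> has_real_derivative \<phi>') (at a)" and d\<psi>: "(\<psi> has_real_derivative \<psi>') (at a)"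
    and s1: "sin (\<phi> a + pi/2 - \<psi> a) \<noteq> 0" and s2: "sin (- \<phi> a + pi/2 - \<psi> a) \<noteq> 0" and s3: "sin (\<psi> a) \<noteq> 0"
  shows "((\<lambda>x. VV (\<phi> x) (\<psi> x)) has_real_derivative
    (- lsin (\<phi> a + pi/2 - \<psi> a) * (\<phi>' - \<psi>')) / 4 + (- lsin (- \<phi> a + pi/2 - \<psi> a) * (- \<phi>' - \<psi>')) / 4
      + (- lsin (\<psi> a) * \<psi>') / 2) (at a)"
proof -
  have g1: "((\<lambda>x. \<phi> x + pi/2 - \<psi> x) has_real_derivative \<phi>' - \<psi>') (at a)"
    using DERIV_diff[OF DERIV_add[OF d\<phi> DERIV_const[of "pi/2"]] d\<psi>] by simp
  have g2: "((\<lambda>x. - \<phi> x + pi/2 - \<psi> x) has_real_derivative - \<phi>' - \<psi>') (at a)"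
    using DERIV_diff[OF DERIV_add[OF DERIV_minus[OF d\<phi>] DERIV_const[of "pi/2"]] d\<psi>] by simp
  have l1: "((\<lambda>x. Lob (\<phi> x + pi/2 - \<psi> x)) has_real_derivative - lsin (\<phi> a + pi/2 - \<psi> a) * (\<phi>' - \<psi>')) (at a)"
    by (rule Lob_chain[OF g1 s1])
  have l2: "((\<lambda>x. Lob (- \<phi> x + pi/2 - \<psi> x)) has_real_derivative - lsin (- \<phi> a + pi/2 - \<psi> a) * (- \<phi>' - \<psi>')) (at a)"
    by (rule Lob_chain[OF g2 s2])
  have l3: "((\<lambda>x. Lob (\<psi> x)) has_real_derivative - lsin (\<psi> a) * \<psi>') (at a)"
    by (rule Lob_chain[OF d\<psi> s3])
  show ?thesis unfolding VV_def
    by (intro DERIV_add DERIV_cdivide l1 l2 l3)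
qed

lemma Iphi_int: "Iphi (of_int m * pi) x = 0"
proof -
  have "Lob (of_int m * pi - x) = Lob (- x + of_int m * pi)" by (rule Lob_arg) simp
  also have "\<dots> = - Lob x" by (simp only: Lob_plus_int_pi Lob_odd)
  finally show ?thesis unfolding Iphi_def using Lob_half_int[of m] by simp
qed

lemma ext_zero [simp]: "ext_arctan_quot 0 d = 0"
  by (simp add: ext_arctan_quot_def)

lemma deg_case:
  fixes \<alpha> \<beta> \<gamma> :: real
  assumes "sin \<gamma> = 0"
  shows "2 * VV \<alpha> (omega \<gamma> \<alpha> \<beta>) + 2 * VV \<beta> (omega \<gamma> \<beta> \<alpha>) =
    Iphi (pi - \<gamma>) ((\<alpha> - \<beta> - \<gamma> + pi) / 2) - Iphi \<gamma> ((\<alpha> + \<beta> + \<gamma> - pi) / 2)"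
proof -
  obtain k :: int where k: "\<gamma> = of_int k * pi" using assms by (auto simp: sin_zero_iff_int2)
  have 1: "pi - \<gamma> = of_int (1 - k) * pi" using k by (simp add: algebra_simps)
  have "omega \<gamma> \<alpha> \<beta> = 0" "omega \<gamma> \<beta> \<alpha> = 0" using assms by (simp_all add: omega_def)
  then show ?thesis unfolding 1 using Iphi_int[of "1 - k"] Iphi_int[of k] k by (simp add: VV_zero)
qed

lemma trig_bq:
  fixes \<alpha> \<beta> \<gamma> :: real
  shows "2 * sin (pi - \<gamma> - (\<alpha> - \<beta> - \<gamma> + pi)/2) * sin ((\<alpha> + \<beta> + \<gamma> - pi)/2) = - (cos \<beta> + cos (\<alpha> + \<gamma>))"
proof -
  have a: "(pi - \<gamma> - (\<alpha> - \<beta> - \<gamma> + pi)/2) - ((\<alpha> + \<beta> + \<gamma> - pi)/2) = pi - (\<alpha> + \<gamma>)" by (simp add: field_simps)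
  have b: "(pi - \<gamma> - (\<alpha> - \<beta> - \<gamma> + pi)/2) + ((\<alpha> + \<beta> + \<gamma> - pi)/2) = \<beta>" by (simp add: field_simps)
  have c: "cos (pi - (\<alpha> + \<gamma>)) = - cos (\<alpha> + \<gamma>)" by (simp only: cos_diff) simp
  show ?thesis using sin_times_sin[of "pi - \<gamma> - (\<alpha> - \<beta> - \<gamma> + pi)/2" "(\<alpha> + \<beta> + \<gamma> - pi)/2"]
    unfolding a b c by simp
qed

lemma trig_pd:
  fixes \<alpha> \<beta> \<gamma> :: real
  shows "2 * sin ((\<alpha> - \<beta> - \<gamma> + pi)/2) * sin (\<gamma> - (\<alpha> + \<beta> + \<gamma> - pi)/2) = cos \<beta> + cos (\<alpha> - \<gamma>)"
proof -
  have a: "((\<alpha> - \<beta> - \<gamma> + pi)/2) - (\<gamma> - (\<alpha> + \<beta> + \<gamma> - pi)/2) = \<alpha> - \<gamma>" by (simp add: field_simps)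
  have b: "((\<alpha> - \<beta> - \<gamma> + pi)/2) + (\<gamma> - (\<alpha> + \<beta> + \<gamma> - pi)/2) = pi - \<beta>" by (simp add: field_simps)
  have c: "cos (pi - \<beta>) = - cos \<beta>" by (simp only: cos_diff) simp
  show ?thesis using sin_times_sin[of "(\<alpha> - \<beta> - \<gamma> + pi)/2" "\<gamma> - (\<alpha> + \<beta> + \<gamma> - pi)/2"]
    unfolding a b c by simp
qed


lemma lsin_pair:
  fixes u v X :: real
  assumes "sin u \<noteq> 0" "sin v \<noteq> 0" "2 * sin u * sin v = X \<or> 2 * sin u * sin v = - X"
  shows "lsin u + lsin v = ln 2 + ln \<bar>X\<bar>"
proof -
  have X: "X \<noteq> 0" using assms by auto
  have "lsin u + lsin v = ln \<bar>(2 * sin u) * (2 * sin v)\<bar>"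
    unfolding lsin_def by (rule ln_mult_abs[symmetric]) (use assms(1,2) in auto)
  also have "\<bar>(2 * sin u) * (2 * sin v)\<bar> = 2 * \<bar>X\<bar>"
  proof -
    have h: "\<bar>2 * sin u * sin v\<bar> = \<bar>X\<bar>" using assms(3) by auto
    have "\<bar>(2 * sin u) * (2 * sin v)\<bar> = 2 * \<bar>2 * sin u * sin v\<bar>" by (simp add: abs_mult)
    then show ?thesis using h by simp
  qed
  also have "ln (2 * \<bar>X\<bar>) = ln 2 + ln \<bar>X\<bar>" using X by (simp add: ln_mult)
  finally show ?thesis .
qed

lemma arith_aux:
  fixes P B Q D L1 L2 :: real
  assumes "B + Q = ln 2 + L1" "P + D = ln 2 + L2"
  shows "(- P * (1/2) + - B * (- 1/2) - 0) - (- Q * (1/2) + - D * (- 1/2) - 0) = (L1 - L2) / 2"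
  using assms by (simp add: field_simps)

lemma RHS_deriv:
  fixes \<alpha> \<beta> \<gamma> :: real
  assumes sp: "sin ((\<alpha> - \<beta> - \<gamma> + pi)/2) \<noteq> 0" and sb: "sin (pi - \<gamma> - (\<alpha> - \<beta> - \<gamma> + pi)/2) \<noteq> 0"
    and sq: "sin ((\<alpha> + \<beta> + \<gamma> - pi)/2) \<noteq> 0" and sd: "sin (\<gamma> - (\<alpha> + \<beta> + \<gamma> - pi)/2) \<noteq> 0"
  shows "((\<lambda>a. Iphi (pi - \<gamma>) ((a - \<beta> - \<gamma> + pi) / 2) - Iphi \<gamma> ((a + \<beta> + \<gamma> - pi) / 2)) has_real_derivative
     (ln \<bar>cos \<beta> + cos (\<alpha> + \<gamma>)\<bar> - ln \<bar>cos \<beta> + cos (\<alpha> - \<gamma>)\<bar>) / 2) (at \<alpha>)"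
proof -
  have gp: "((\<lambda>a. (a - \<beta> - \<gamma> + pi)/2) has_real_derivative 1/2) (at \<alpha>)"
    by (auto intro!: derivative_eq_intros)
  have gb: "((\<lambda>a. pi - \<gamma> - (a - \<beta> - \<gamma> + pi)/2) has_real_derivative - 1/2) (at \<alpha>)"
    by (auto intro!: derivative_eq_intros)
  have gq: "((\<lambda>a. (a + \<beta> + \<gamma> - pi)/2) has_real_derivative 1/2) (at \<alpha>)"
    by (auto intro!: derivative_eq_intros)
  have gd: "((\<lambda>a. \<gamma> - (a + \<beta> + \<gamma> - pi)/2) has_real_derivative - 1/2) (at \<alpha>)"
    by (auto intro!: derivative_eq_intros)
  note l1 = Lob_chain[OF gp sp] and l2 = Lob_chain[OF gb sb] and l3 = Lob_chain[OF gq sq] and l4 = Lob_chain[OF gd sd]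
  have D: "((\<lambda>a. Iphi (pi - \<gamma>) ((a - \<beta> - \<gamma> + pi) / 2) - Iphi \<gamma> ((a + \<beta> + \<gamma> - pi) / 2)) has_real_derivative
     (- lsin ((\<alpha> - \<beta> - \<gamma> + pi)/2) * (1/2) + - lsin (pi - \<gamma> - (\<alpha> - \<beta> - \<gamma> + pi)/2) * (- 1/2) - 0)
     - (- lsin ((\<alpha> + \<beta> + \<gamma> - pi)/2) * (1/2) + - lsin (\<gamma> - (\<alpha> + \<beta> + \<gamma> - pi)/2) * (- 1/2) - 0)) (at \<alpha>)"
    unfolding Iphi_def by (intro DERIV_diff DERIV_add l1 l2 l3 l4 DERIV_const)
  have e1: "lsin (pi - \<gamma> - (\<alpha> - \<beta> - \<gamma> + pi)/2) + lsin ((\<alpha> + \<beta> + \<gamma> - pi)/2) = ln 2 + ln \<bar>cos \<beta> + cos (\<alpha> + \<gamma>)\<bar>"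
    by (rule lsin_pair[OF sb sq]) (use trig_bq[of \<gamma> \<alpha> \<beta>] in auto)
  have e2: "lsin ((\<alpha> - \<beta> - \<gamma> + pi)/2) + lsin (\<gamma> - (\<alpha> + \<beta> + \<gamma> - pi)/2) = ln 2 + ln \<bar>cos \<beta> + cos (\<alpha> - \<gamma>)\<bar>"
    by (rule lsin_pair[OF sp sd]) (use trig_pd[of \<alpha> \<beta> \<gamma>] in auto)
  have eqn: "(- lsin ((\<alpha> - \<beta> - \<gamma> + pi)/2) * (1/2) + - lsin (pi - \<gamma> - (\<alpha> - \<beta> - \<gamma> + pi)/2) * (- 1/2) - 0)
     - (- lsin ((\<alpha> + \<beta> + \<gamma> - pi)/2) * (1/2) + - lsin (\<gamma> - (\<alpha> + \<beta> + \<gamma> - pi)/2) * (- 1/2) - 0)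
     = (ln \<bar>cos \<beta> + cos (\<alpha> + \<gamma>)\<bar> - ln \<bar>cos \<beta> + cos (\<alpha> - \<gamma>)\<bar>) / 2"
    by (rule arith_aux[OF e1 e2])
  show ?thesis using D unfolding eqn .
qed


lemma arith_aux2:
  fixes A B S1 C D S2 L t :: real
  assumes "A + B - 2 * S1 = C + D - 2 * S2" "B - A = L"
  shows "2 * ((- A * (1 - t)) / 4 + (- B * (- 1 - t)) / 4 + (- S1 * t) / 2)
       + 2 * ((- C * (0 - (0 - t))) / 4 + (- D * (- 0 - (0 - t))) / 4 + (- S2 * (0 - t)) / 2) = L / 2"
proof -
  have "2 * ((- A * (1 - t)) / 4 + (- B * (- 1 - t)) / 4 + (- S1 * t) / 2)
       + 2 * ((- C * (0 - (0 - t))) / 4 + (- D * (- 0 - (0 - t))) / 4 + (- S2 * (0 - t)) / 2)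
      = (B - A) / 2 + (t / 2) * ((A + B - 2 * S1) - (C + D - 2 * S2))"
    by (simp add: field_simps)
  then show ?thesis using assms by simp
qed

lemma LHS_local_deriv:
  fixes \<alpha> \<beta> \<gamma> t :: real and \<theta> :: "real \<Rightarrow> real"
  assumes sg: "sin \<gamma> \<noteq> 0" and cb: "cos \<beta> \<noteq> 0"
    and d\<theta>: "(\<theta> has_real_derivative t) (at \<alpha>)"
    and rel: "sin (\<theta> \<alpha>) * (cos \<beta> + cos \<alpha> * cos \<gamma>) = cos (\<theta> \<alpha>) * (cos \<alpha> * sin \<gamma>)"
    and ca: "cos \<alpha> \<noteq> 0" and n1: "cos \<beta> + cos (\<alpha> + \<gamma>) \<noteq> 0" and n2: "cos \<beta> + cos (\<alpha> - \<gamma>) \<noteq> 0"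
  shows "((\<lambda>a. 2 * VV a (\<theta> a) + 2 * VV \<beta> (\<gamma> - \<theta> a)) has_real_derivative
           (ln \<bar>cos \<beta> + cos (\<alpha> + \<gamma>)\<bar> - ln \<bar>cos \<beta> + cos (\<alpha> - \<gamma>)\<bar>) / 2) (at \<alpha>)"
proof -
  define T where "T = \<theta> \<alpha>"
  have R: "cos \<beta> * sin T = cos \<alpha> * sin (\<gamma> - T)" unfolding T_def by (rule rel_R[OF rel])
  have sT: "sin T \<noteq> 0"
  proof
    assume h: "sin T = 0"
    then have "sin (\<gamma> - T) = 0" using R ca by simp
    then have "sin \<gamma> * cos T = 0" using h by (simp add: sin_diff)
    then have "cos T = 0" using sg by simp
    then show False using h sin_cos_squared_add[of T] by simp
  qed
  have sgT: "sin (\<gamma> - T) \<noteq> 0" using R sT cb by auto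
  have P: "cos (\<alpha> + T) * (cos \<beta> + cos (\<alpha> - \<gamma>)) = cos (\<alpha> - T) * (cos \<beta> + cos (\<alpha> + \<gamma>))"
    by (rule rel_P[OF R])
  have cpm: "cos (\<alpha> + T) \<noteq> 0 \<and> cos (\<alpha> - T) \<noteq> 0"
  proof (rule ccontr)
    assume "\<not> (cos (\<alpha> + T) \<noteq> 0 \<and> cos (\<alpha> - T) \<noteq> 0)"
    then have both: "cos (\<alpha> + T) = 0" "cos (\<alpha> - T) = 0" using P n1 n2 by auto
    have "cos \<alpha> * cos T = 0" using both unfolding cos_add cos_diff by linarith
    then have cT: "cos T = 0" using ca by simp
    have "sin \<alpha> * sin T = 0" using both unfolding cos_add cos_diff by linarith
    then have sa: "sin \<alpha> = 0" using sT by simp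
    have "sin T * (cos \<beta> + cos \<alpha> * cos \<gamma>) = 0" using rel cT unfolding T_def by simp
    then have "cos \<beta> + cos \<alpha> * cos \<gamma> = 0" using sT by simp
    then have "cos \<beta> + cos (\<alpha> + \<gamma>) = 0" using sa by (simp add: cos_add)
    then show False using n1 by simp
  qed
  have x1: "2 * sin (\<alpha> + pi/2 - T) \<noteq> 0" using cpm unfolding sin_shift1 by simp
  have x2: "2 * sin (- \<alpha> + pi/2 - T) \<noteq> 0" using cpm unfolding sin_shift2 by simp
  have K: "(2 * sin (\<alpha> + pi/2 - T)) * (2 * sin (- \<alpha> + pi/2 - T)) * (2 * sin (\<gamma> - T))^2
       = (2 * sin (\<beta> + pi/2 - (\<gamma> - T))) * (2 * sin (- \<beta> + pi/2 - (\<gamma> - T))) * (2 * sin T)^2"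
    by (rule rel_K[OF R])
  have lhs_nz: "(2 * sin (\<alpha> + pi/2 - T)) * (2 * sin (- \<alpha> + pi/2 - T)) * (2 * sin (\<gamma> - T))^2 \<noteq> 0"
    using x1 x2 sgT by simp
  have z1: "sin (\<beta> + pi/2 - (\<gamma> - T)) \<noteq> 0" and z2: "sin (- \<beta> + pi/2 - (\<gamma> - T)) \<noteq> 0"
    using lhs_nz unfolding K by auto
  have K': "lsin (\<alpha> + pi/2 - T) + lsin (- \<alpha> + pi/2 - T) - 2 * lsin T
      = lsin (\<beta> + pi/2 - (\<gamma> - T)) + lsin (- \<beta> + pi/2 - (\<gamma> - T)) - 2 * lsin (\<gamma> - T)"
    unfolding lsin_def by (rule ln_prod_id[OF K x1 x2]) (use sT sgT in auto)
  have M: "lsin (- \<alpha> + pi/2 - T) - lsin (\<alpha> + pi/2 - T)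
      = ln \<bar>cos \<beta> + cos (\<alpha> + \<gamma>)\<bar> - ln \<bar>cos \<beta> + cos (\<alpha> - \<gamma>)\<bar>"
    unfolding lsin_def sin_shift2[of \<alpha> T] sin_shift1[of \<alpha> T] by (rule ln_ratio_id[OF P]) (use cpm n2 in auto)
  have p1: "((\<lambda>a. VV a (\<theta> a)) has_real_derivative
      (- lsin (\<alpha> + pi/2 - \<theta> \<alpha>) * (1 - t)) / 4 + (- lsin (- \<alpha> + pi/2 - \<theta> \<alpha>) * (- 1 - t)) / 4
      + (- lsin (\<theta> \<alpha>) * t) / 2) (at \<alpha>)"
    using VV_deriv[OF DERIV_ident d\<theta>] x1 x2 sT unfolding T_def by simp
  have p2: "((\<lambda>a. VV \<beta> (\<gamma> - \<theta> a)) has_real_derivative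
      (- lsin (\<beta> + pi/2 - (\<gamma> - \<theta> \<alpha>)) * (0 - (0 - t))) / 4 + (- lsin (- \<beta> + pi/2 - (\<gamma> - \<theta> \<alpha>)) * (- 0 - (0 - t))) / 4
      + (- lsin (\<gamma> - \<theta> \<alpha>) * (0 - t)) / 2) (at \<alpha>)"
    by (rule VV_deriv[OF DERIV_const DERIV_diff[OF DERIV_const d\<theta>]]) (use z1 z2 sgT in \<open>auto simp: T_def\<close>)
  have tot: "((\<lambda>a. 2 * VV a (\<theta> a) + 2 * VV \<beta> (\<gamma> - \<theta> a)) has_real_derivative
      2 * ((- lsin (\<alpha> + pi/2 - \<theta> \<alpha>) * (1 - t)) / 4 + (- lsin (- \<alpha> + pi/2 - \<theta> \<alpha>) * (- 1 - t)) / 4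
      + (- lsin (\<theta> \<alpha>) * t) / 2) + 2 * ((- lsin (\<beta> + pi/2 - (\<gamma> - \<theta> \<alpha>)) * (0 - (0 - t))) / 4 + (- lsin (- \<beta> + pi/2 - (\<gamma> - \<theta> \<alpha>)) * (- 0 - (0 - t))) / 4
      + (- lsin (\<gamma> - \<theta> \<alpha>) * (0 - t)) / 2)) (at \<alpha>)"
    by (rule DERIV_add[OF DERIV_cmult[OF p1] DERIV_cmult[OF p2]])
  have eqn: "2 * ((- lsin (\<alpha> + pi/2 - \<theta> \<alpha>) * (1 - t)) / 4 + (- lsin (- \<alpha> + pi/2 - \<theta> \<alpha>) * (- 1 - t)) / 4
      + (- lsin (\<theta> \<alpha>) * t) / 2) + 2 * ((- lsin (\<beta> + pi/2 - (\<gamma> - \<theta> \<alpha>)) * (0 - (0 - t))) / 4 + (- lsin (- \<beta> + pi/2 - (\<gamma> - \<theta> \<alpha>)) * (- 0 - (0 - t))) / 4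
      + (- lsin (\<gamma> - \<theta> \<alpha>) * (0 - t)) / 2)
      = (ln \<bar>cos \<beta> + cos (\<alpha> + \<gamma>)\<bar> - ln \<bar>cos \<beta> + cos (\<alpha> - \<gamma>)\<bar>) / 2"
    by (rule arith_aux2) (use K' M in \<open>simp_all add: T_def\<close>)
  show ?thesis using tot unfolding eqn .
qed


lemma LHS_eq:
  fixes \<alpha> \<beta> \<gamma> T :: real
  assumes sg: "sin \<gamma> \<noteq> 0" and cb: "cos \<beta> \<noteq> 0"
    and rel: "sin T * (cos \<beta> + cos \<alpha> * cos \<gamma>) = cos T * (cos \<alpha> * sin \<gamma>)"
  shows "2 * VV \<alpha> (omega \<gamma> \<alpha> \<beta>) + 2 * VV \<beta> (omega \<gamma> \<beta> \<alpha>) = 2 * VV \<alpha> T + 2 * VV \<beta> (\<gamma> - T)"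
proof -
  have R: "cos \<beta> * sin T = cos \<alpha> * sin (\<gamma> - T)" by (rule rel_R[OF rel])
  have 1: "VV \<alpha> (omega \<gamma> \<alpha> \<beta>) = VV \<alpha> T"
  proof (cases "cos \<alpha> = 0")
    case True then show ?thesis by (simp add: VV_cos0)
  next
    case False
    show ?thesis unfolding omega_def
      by (rule VV_ext) (use False sg rel in \<open>auto simp: algebra_simps\<close>)
  qed
  have 2: "VV \<beta> (omega \<gamma> \<beta> \<alpha>) = VV \<beta> (\<gamma> - T)"
    unfolding omega_def
    by (rule VV_ext) (use cb sg rel_2[OF R] in auto)
  show ?thesis using 1 2 by simp
qed

lemma LHS_cb0:
  fixes \<alpha> \<beta> \<gamma> :: real
  assumes sg: "sin \<gamma> \<noteq> 0" and cb: "cos \<beta> = 0"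
  shows "2 * VV \<alpha> (omega \<gamma> \<alpha> \<beta>) + 2 * VV \<beta> (omega \<gamma> \<beta> \<alpha>) = 2 * VV \<alpha> \<gamma>"
proof -
  have 1: "VV \<alpha> (omega \<gamma> \<alpha> \<beta>) = VV \<alpha> \<gamma>"
  proof (cases "cos \<alpha> = 0")
    case True then show ?thesis by (simp add: VV_cos0)
  next
    case False
    show ?thesis unfolding omega_def
      by (rule VV_ext) (use False sg cb in \<open>auto simp: algebra_simps\<close>)
  qed
  show ?thesis using 1 cb by (simp add: VV_cos0)
qed

lemma arctan_rel: "sin (arctan y) = y * cos (arctan y)"
  using tan_arctan[of y] cos_arctan_not_zero[of y] by (simp add: tan_def field_simps)

lemma local_rep:
  fixes \<alpha>0 \<beta> \<gamma> :: real
  assumes sg: "sin \<gamma> \<noteq> 0" and cb: "cos \<beta> \<noteq> 0"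
  shows "\<exists>S \<theta>. open S \<and> \<alpha>0 \<in> S \<and> (\<forall>\<alpha>\<in>S. (\<exists>t. (\<theta> has_real_derivative t) (at \<alpha>)) \<and>
            sin (\<theta> \<alpha>) * (cos \<beta> + cos \<alpha> * cos \<gamma>) = cos (\<theta> \<alpha>) * (cos \<alpha> * sin \<gamma>))"
proof (cases "cos \<beta> + cos \<alpha>0 * cos \<gamma> = 0")
  case False
  define S where "S = {\<alpha>. cos \<beta> + cos \<alpha> * cos \<gamma> \<noteq> 0}"
  define \<theta> where "\<theta> \<alpha> = arctan ((cos \<alpha> * sin \<gamma>) / (cos \<beta> + cos \<alpha> * cos \<gamma>))" for \<alpha>
  have "open S" unfolding S_def
    by (rule open_Collect_neq) (intro continuous_intros)+
  moreover have "\<alpha>0 \<in> S" using False by (simp add: S_def)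
  moreover have "(\<exists>t. (\<theta> has_real_derivative t) (at \<alpha>)) \<and>
            sin (\<theta> \<alpha>) * (cos \<beta> + cos \<alpha> * cos \<gamma>) = cos (\<theta> \<alpha>) * (cos \<alpha> * sin \<gamma>)" if "\<alpha> \<in> S" for \<alpha>
  proof
    have d: "cos \<beta> + cos \<alpha> * cos \<gamma> \<noteq> 0" using that by (simp add: S_def)
    show "\<exists>t. (\<theta> has_real_derivative t) (at \<alpha>)"
      unfolding \<theta>_def[abs_def] by (rule exI) (use d in \<open>auto intro!: derivative_eq_intros\<close>)
    show "sin (\<theta> \<alpha>) * (cos \<beta> + cos \<alpha> * cos \<gamma>) = cos (\<theta> \<alpha>) * (cos \<alpha> * sin \<gamma>)"
      unfolding \<theta>_def arctan_rel using d by (simp add: field_simps)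
  qed
  ultimately show ?thesis by blast
next
  case True
  have ca: "cos \<alpha>0 \<noteq> 0" using True cb by auto
  define S where "S = {\<alpha>. cos \<alpha> * sin \<gamma> \<noteq> 0}"
  define \<theta> where "\<theta> \<alpha> = pi/2 - arctan ((cos \<beta> + cos \<alpha> * cos \<gamma>) / (cos \<alpha> * sin \<gamma>))" for \<alpha>
  have "open S" unfolding S_def
    by (rule open_Collect_neq) (intro continuous_intros)+
  moreover have "\<alpha>0 \<in> S" using ca sg by (simp add: S_def)
  moreover have "(\<exists>t. (\<theta> has_real_derivative t) (at \<alpha>)) \<and>
            sin (\<theta> \<alpha>) * (cos \<beta> + cos \<alpha> * cos \<gamma>) = cos (\<theta> \<alpha>) * (cos \<alpha> * sin \<gamma>)" if "\<alpha> \<in> S" for \<alpha>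
  proof
    have c: "cos \<alpha> * sin \<gamma> \<noteq> 0" using that by (simp add: S_def)
    show "\<exists>t. (\<theta> has_real_derivative t) (at \<alpha>)"
      unfolding \<theta>_def[abs_def] by (rule exI) (use c in \<open>auto intro!: derivative_eq_intros\<close>)
    have "sin (\<theta> \<alpha>) = cos (arctan ((cos \<beta> + cos \<alpha> * cos \<gamma>) / (cos \<alpha> * sin \<gamma>)))"
      unfolding \<theta>_def by (simp add: sin_diff)
    moreover have "cos (\<theta> \<alpha>) = sin (arctan ((cos \<beta> + cos \<alpha> * cos \<gamma>) / (cos \<alpha> * sin \<gamma>)))"
      unfolding \<theta>_def by (simp add: cos_diff)
    ultimately show "sin (\<theta> \<alpha>) * (cos \<beta> + cos \<alpha> * cos \<gamma>) = cos (\<theta> \<alpha>) * (cos \<alpha> * sin \<gamma>)"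
      unfolding arctan_rel using c by (simp add: field_simps)
  qed
  ultimately show ?thesis by blast
qed


lemma main_case:
  fixes \<alpha> \<beta> \<gamma> :: real
  assumes sg: "sin \<gamma> \<noteq> 0"
  shows "2 * VV \<alpha> (omega \<gamma> \<alpha> \<beta>) + 2 * VV \<beta> (omega \<gamma> \<beta> \<alpha>) =
    Iphi (pi - \<gamma>) ((\<alpha> - \<beta> - \<gamma> + pi) / 2) - Iphi \<gamma> ((\<alpha> + \<beta> + \<gamma> - pi) / 2)"
proof -
  define L where "L a = 2 * VV a (omega \<gamma> a \<beta>) + 2 * VV \<beta> (omega \<gamma> \<beta> a)" for a
  define Rr where "Rr a = Iphi (pi - \<gamma>) ((a - \<beta> - \<gamma> + pi) / 2) - Iphi \<gamma> ((a + \<beta> + \<gamma> - pi) / 2)" for a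
  define Dt where "Dt a = (ln \<bar>cos \<beta> + cos (a + \<gamma>)\<bar> - ln \<bar>cos \<beta> + cos (a - \<gamma>)\<bar>) / 2" for a
  define E where "E = {a. cos a = 0 \<or> sin ((a - \<beta> - \<gamma> + pi)/2) = 0 \<or> sin (pi - \<gamma> - (a - \<beta> - \<gamma> + pi)/2) = 0
      \<or> sin ((a + \<beta> + \<gamma> - pi)/2) = 0 \<or> sin (\<gamma> - (a + \<beta> + \<gamma> - pi)/2) = 0}"
  have finE: "finite (E \<inter> {a..b})" for a b :: real
  proof -
    have "E \<inter> {a..b} \<subseteq> {x \<in> {a..b}. sin (1 * x + pi/2) = 0} \<union> {x \<in> {a..b}. sin ((1/2) * x + (pi - \<beta> - \<gamma>)/2) = 0}
       \<union> {x \<in> {a..b}. sin ((-1/2) * x + (pi - \<gamma> + \<beta>)/2) = 0} \<union> {x \<in> {a..b}. sin ((1/2) * x + (\<beta> + \<gamma> - pi)/2) = 0}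
       \<union> {x \<in> {a..b}. sin ((-1/2) * x + (\<gamma> - \<beta> + pi)/2) = 0}"
    proof
      fix x assume x: "x \<in> E \<inter> {a..b}"
      have e1: "sin (1 * x + pi/2) = cos x" by (simp add: sin_add)
      have e2: "sin ((x - \<beta> - \<gamma> + pi)/2) = sin ((1/2) * x + (pi - \<beta> - \<gamma>)/2)"
        by (rule arg_cong[where f=sin]) (simp add: field_simps)
      have e3: "sin (pi - \<gamma> - (x - \<beta> - \<gamma> + pi)/2) = sin ((-1/2) * x + (pi - \<gamma> + \<beta>)/2)"
        by (rule arg_cong[where f=sin]) (simp add: field_simps)
      have e4: "sin ((x + \<beta> + \<gamma> - pi)/2) = sin ((1/2) * x + (\<beta> + \<gamma> - pi)/2)"
        by (rule arg_cong[where f=sin]) (simp add: field_simps)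
      have e5: "sin (\<gamma> - (x + \<beta> + \<gamma> - pi)/2) = sin ((-1/2) * x + (\<gamma> - \<beta> + pi)/2)"
        by (rule arg_cong[where f=sin]) (simp add: field_simps)
      show "x \<in> {x \<in> {a..b}. sin (1 * x + pi/2) = 0} \<union> {x \<in> {a..b}. sin ((1/2) * x + (pi - \<beta> - \<gamma>)/2) = 0}
       \<union> {x \<in> {a..b}. sin ((-1/2) * x + (pi - \<gamma> + \<beta>)/2) = 0} \<union> {x \<in> {a..b}. sin ((1/2) * x + (\<beta> + \<gamma> - pi)/2) = 0}
       \<union> {x \<in> {a..b}. sin ((-1/2) * x + (\<gamma> - \<beta> + pi)/2) = 0}"
        using x unfolding E_def by (simp only: e1 e2 e3 e4 e5 Int_iff mem_Collect_eq Un_iff) blast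
    qed
    moreover have "finite ({x \<in> {a..b}. sin (1 * x + pi/2) = 0} \<union> {x \<in> {a..b}. sin ((1/2) * x + (pi - \<beta> - \<gamma>)/2) = 0}
       \<union> {x \<in> {a..b}. sin ((-1/2) * x + (pi - \<gamma> + \<beta>)/2) = 0} \<union> {x \<in> {a..b}. sin ((1/2) * x + (\<beta> + \<gamma> - pi)/2) = 0}
       \<union> {x \<in> {a..b}. sin ((-1/2) * x + (\<gamma> - \<beta> + pi)/2) = 0})"
      by (intro finite_UnI fin_sin_zero) auto
    ultimately show ?thesis by (rule finite_subset)
  qed
  have nE: "cos a \<noteq> 0 \<and> cos \<beta> + cos (a + \<gamma>) \<noteq> 0 \<and> cos \<beta> + cos (a - \<gamma>) \<noteq> 0 \<and>
      sin ((a - \<beta> - \<gamma> + pi)/2) \<noteq> 0 \<and> sin (pi - \<gamma> - (a - \<beta> - \<gamma> + pi)/2) \<noteq> 0 \<and>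
      sin ((a + \<beta> + \<gamma> - pi)/2) \<noteq> 0 \<and> sin (\<gamma> - (a + \<beta> + \<gamma> - pi)/2) \<noteq> 0" if "a \<notin> E" for a
  proof -
    have s: "cos a \<noteq> 0" "sin ((a - \<beta> - \<gamma> + pi)/2) \<noteq> 0" "sin (pi - \<gamma> - (a - \<beta> - \<gamma> + pi)/2) \<noteq> 0"
      "sin ((a + \<beta> + \<gamma> - pi)/2) \<noteq> 0" "sin (\<gamma> - (a + \<beta> + \<gamma> - pi)/2) \<noteq> 0"
      using that unfolding E_def by auto
    have "2 * sin (pi - \<gamma> - (a - \<beta> - \<gamma> + pi)/2) * sin ((a + \<beta> + \<gamma> - pi)/2) \<noteq> 0" using s by simp
    then have "cos \<beta> + cos (a + \<gamma>) \<noteq> 0" unfolding trig_bq[of \<gamma> a \<beta>] by simp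
    have "2 * sin ((a - \<beta> - \<gamma> + pi)/2) * sin (\<gamma> - (a + \<beta> + \<gamma> - pi)/2) \<noteq> 0" using s by simp
    then have "cos \<beta> + cos (a - \<gamma>) \<noteq> 0" unfolding trig_pd[of a \<beta> \<gamma>] by simp
    moreover note \<open>cos \<beta> + cos (a + \<gamma>) \<noteq> 0\<close>
    ultimately show ?thesis using s by blast
  qed
  have contR: "isCont Rr a" for a
    unfolding Rr_def Iphi_def by (intro continuous_intros) auto
  have dR: "(Rr has_real_derivative Dt a) (at a)" if "a \<notin> E" for a
    unfolding Rr_def[abs_def] Dt_def by (rule RHS_deriv) (use nE[OF that] in auto)
  have LdL: "isCont L a \<and> (a \<notin> E \<longrightarrow> (L has_real_derivative Dt a) (at a))" for a
  proof (cases "cos \<beta> = 0")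
    case True
    have Leq: "L = (\<lambda>a. 2 * VV a \<gamma>)" unfolding L_def[abs_def] using LHS_cb0[OF sg True] by simp
    have c: "isCont L a" unfolding Leq VV_def by (intro continuous_intros) auto
    have d: "(L has_real_derivative Dt a) (at a)" if "a \<notin> E"
    proof -
      note n = nE[OF that]
      have c1: "sin (a + pi/2 - \<gamma>) \<noteq> 0" unfolding sin_shift1 using n True by simp
      have c2: "sin (- a + pi/2 - \<gamma>) \<noteq> 0" unfolding sin_shift2 using n True by simp
      have "((\<lambda>x. VV x \<gamma>) has_real_derivative
          (- lsin (a + pi/2 - \<gamma>) * (1 - 0)) / 4 + (- lsin (- a + pi/2 - \<gamma>) * (- 1 - 0)) / 4 + (- lsin \<gamma> * 0) / 2) (at a)"
        using VV_deriv[OF DERIV_ident DERIV_const, of a \<gamma>] c1 c2 sg by simp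
      then have dd: "((\<lambda>x. 2 * VV x \<gamma>) has_real_derivative 2 * ((- lsin (a + pi/2 - \<gamma>) * (1 - 0)) / 4
          + (- lsin (- a + pi/2 - \<gamma>) * (- 1 - 0)) / 4 + (- lsin \<gamma> * 0) / 2)) (at a)"
        by (rule DERIV_cmult)
      have M: "lsin (- a + pi/2 - \<gamma>) - lsin (a + pi/2 - \<gamma>) = ln \<bar>cos \<beta> + cos (a + \<gamma>)\<bar> - ln \<bar>cos \<beta> + cos (a - \<gamma>)\<bar>"
        unfolding lsin_def sin_shift2[of a \<gamma>] sin_shift1[of a \<gamma>]
        by (rule ln_ratio_id) (use n True in auto)
      have "2 * ((- lsin (a + pi/2 - \<gamma>) * (1 - 0)) / 4 + (- lsin (- a + pi/2 - \<gamma>) * (- 1 - 0)) / 4 + (- lsin \<gamma> * 0) / 2) = Dt a"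
        unfolding Dt_def using M by simp
      then show ?thesis using dd unfolding Leq by simp
    qed
    show ?thesis using c d by blast
  next
    case False
    obtain S \<theta> where S: "open S" "a \<in> S" and Sp: "\<And>x. x \<in> S \<Longrightarrow> (\<exists>t. (\<theta> has_real_derivative t) (at x)) \<and>
            sin (\<theta> x) * (cos \<beta> + cos x * cos \<gamma>) = cos (\<theta> x) * (cos x * sin \<gamma>)"
      using local_rep[OF sg False, of a] by blast
    have Leq: "2 * VV x (\<theta> x) + 2 * VV \<beta> (\<gamma> - \<theta> x) = L x" if "x \<in> S" for x
      unfolding L_def using LHS_eq[OF sg False Sp[OF that, THEN conjunct2]] by simp
    have cth: "isCont \<theta> x" if "x \<in> S" for x
      using Sp[OF that] DERIV_isCont by blast
    have "continuous_on S (\<lambda>x. 2 * VV x (\<theta> x) + 2 * VV \<beta> (\<gamma> - \<theta> x))"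
    proof (intro continuous_at_imp_continuous_on ballI)
      fix x assume "x \<in> S"
      then have ct: "isCont \<theta> x" by (rule cth)
      show "isCont (\<lambda>x. 2 * VV x (\<theta> x) + 2 * VV \<beta> (\<gamma> - \<theta> x)) x"
        unfolding VV_def by (intro continuous_intros ct) auto
    qed
    then have "continuous_on S L" by (rule continuous_on_eq) (rule Leq)
    then have c: "isCont L a" using S by (simp add: continuous_on_eq_continuous_at)
    have d: "(L has_real_derivative Dt a) (at a)" if "a \<notin> E"
    proof -
      note n = nE[OF that]
      obtain t where t: "(\<theta> has_real_derivative t) (at a)" using Sp[OF S(2)] by blast
      have "((\<lambda>x. 2 * VV x (\<theta> x) + 2 * VV \<beta> (\<gamma> - \<theta> x)) has_real_derivative Dt a) (at a)"
        unfolding Dt_def by (rule LHS_local_deriv[OF sg False t conjunct2[OF Sp[OF S(2)]]]) (use n in blast)+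
      then show ?thesis by (rule has_field_derivative_transform_within_open[OF _ S]) (rule Leq)
    qed
    show ?thesis using c d by blast
  qed
  have "(\<lambda>a. L a - Rr a) \<alpha> = (\<lambda>a. L a - Rr a) (pi/2)"
  proof (rule const_lemma[where E=E and h="\<lambda>a. L a - Rr a"])
    show "isCont (\<lambda>a. L a - Rr a) x" for x using LdL contR by (intro continuous_intros) auto
    show "finite (E \<inter> {a..b})" for a b :: real by (rule finE)
    fix x :: real assume "x \<notin> E"
    then have "((\<lambda>a. L a - Rr a) has_real_derivative Dt x - Dt x) (at x)"
      using LdL dR by (intro DERIV_diff) auto
    then show "((\<lambda>a. L a - Rr a) has_real_derivative 0) (at x)" by simp
  qed
  moreover have "L (pi/2) = 2 * VV \<beta> \<gamma>"
  proof (cases "cos \<beta> = 0")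
    case True then show ?thesis unfolding L_def by (simp add: VV_cos0)
  next
    case False
    have "VV \<beta> (omega \<gamma> \<beta> (pi/2)) = VV \<beta> \<gamma>"
      unfolding omega_def by (rule VV_ext) (use False sg in auto)
    then show ?thesis unfolding L_def by (simp add: VV_cos0)
  qed
  moreover have "Rr (pi/2) = 2 * VV \<beta> \<gamma>" unfolding Rr_def by (rule base_identity)
  ultimately have "L \<alpha> = Rr \<alpha>" by simp
  then show ?thesis unfolding L_def Rr_def .
qed

theorem lemma5:
  fixes \<alpha> \<beta> \<gamma> :: real
  shows "2 * VV \<alpha> (omega \<gamma> \<alpha> \<beta>) + 2 * VV \<beta> (omega \<gamma> \<beta> \<alpha>) =
    Iphi (pi - \<gamma>) ((\<alpha> - \<beta> - \<gamma> + pi) / 2) - Iphi \<gamma> ((\<alpha> + \<beta> + \<gamma> - pi) / 2)"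
proof (cases "sin \<gamma> = 0")
  case True then show ?thesis by (rule deg_case)
next
  case False then show ?thesis by (rule main_case)
qed

end
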